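(* Let $m,p,q\in(0,\infty)$, let $(u,v)$ be an admissible pair of weights with respect to $(m,p)$, let $w$ be a weight and $C>0$. Then the inequality \[ \left(\int_0^\infty w(t)(f^*(t))^q\,dt\right)^{\frac1q}\le C\left(\int_0^\infty v(t)\left(\int_t^\infty u(s)(f^*(s))^m ds\right)^{\frac pm}dt\right)^{\frac1p} \] holds for all $f\in\mathscr M$ if and only if the inequality \[ \left(\int_0^\infty w(t)(f^*(t))^{\frac qm}\,dt\right)^{\frac mq}\le C^m\left(\int_0^\infty v(t)\left(\int_t^\infty u(s)f^*(s)\,ds\right)^{\frac pm}dt\right)^{\frac mp} \] holds for all $f\in\mathscr M$.
   Context: $\mathscr M$ is the set of real-valued Lebesgue measurable functions on $\mathbb{R}^n$; for $f\in\mathscr M$, $f^*(t):=\inf\{s\ge0:\ |\{x\in\mathbb{R}^n: |f(x)|>s\}|\le t\}$, $t>0$. A weight is a nonnegative measurable function on $(0,\infty)$. For a weight $u$, $U(s,t):=\int_s^t u$; $(u,v)$ is admissible with respect to $(m,p)$ if $0<\left(\int_0^t v(s)U(s,t)^{p/m}ds\right)^{1/p}<\infty$ for all $t\in(0,\infty)$. *)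

theory Defs
  imports "HOL-Analysis.Analysis"
begin

text \<open>Real powers of extended nonnegative reals (used only with positive exponents):
  infinity to a positive power is infinity, 0 to a positive power is 0.\<close>
definition epowr :: "ennreal \<Rightarrow> real \<Rightarrow> ennreal" where
  "epowr x a = (if x = top then top else ennreal (enn2real x powr a))"

definition is_weight :: "(real \<Rightarrow> real) \<Rightarrow> bool" where
  "is_weight w \<longleftrightarrow> set_borel_measurable lebesgue {0<..} w \<and> (\<forall>t>0. 0 \<le> w t)"

text \<open>Non-increasing rearrangement f*(t) = inf {s \<ge> 0 : |{|f| > s}| \<le> t}
  (value infinity if the set is empty).\<close>
definition decr_rearr :: "('a::euclidean_space \<Rightarrow> real) \<Rightarrow> real \<Rightarrow> ennreal" where
  "decr_rearr f t =
     (INF s\<in>{s::real. 0 \<le> s \<and> emeasure lebesgue {x. s < \<bar>f x\<bar>} \<le> ennreal t}. ennreal s)"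

definition Uint :: "(real \<Rightarrow> real) \<Rightarrow> real \<Rightarrow> real \<Rightarrow> ennreal" where
  "Uint u s t = (\<integral>\<^sup>+x\<in>{s<..<t}. ennreal (u x) \<partial>lebesgue)"

definition admissible :: "(real \<Rightarrow> real) \<Rightarrow> (real \<Rightarrow> real) \<Rightarrow> real \<Rightarrow> real \<Rightarrow> bool" where
  "admissible u v m p \<longleftrightarrow>
     (\<forall>t>0. 0 < epowr (\<integral>\<^sup>+s\<in>{0<..<t}. ennreal (v s) * epowr (Uint u s t) (p / m) \<partial>lebesgue) (1 / p)
          \<and> epowr (\<integral>\<^sup>+s\<in>{0<..<t}. ennreal (v s) * epowr (Uint u s t) (p / m) \<partial>lebesgue) (1 / p) < \<infinity>)"

end

theory Submission imports Defs begin

lemma epowr_top[simp]: "epowr top a = top" by (simp add: epowr_def)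
lemma epowr_fin: "x \<noteq> top \<Longrightarrow> epowr x a = ennreal (enn2real x powr a)" by (simp add: epowr_def)
lemma epowr_ennreal: "0 \<le> s \<Longrightarrow> epowr (ennreal s) a = ennreal (s powr a)" by (simp add: epowr_def)

lemma epowr_epowr: "epowr (epowr x a) b = epowr x (a*b)"
proof (cases "x = top")
  case False
  then show ?thesis by (simp add: epowr_def powr_powr)
qed simp

lemma epowr_one: "epowr x 1 = x"
proof (cases "x = top")
  case False
  then have "x < top" using top.not_eq_extremum by blast
  then show ?thesis using False by (simp add: epowr_def)
qed (simp add: epowr_def)

lemma powr_less_iff_nn:
  fixes x y a :: real
  assumes a: "0 < a" "0 \<le> x" "0 \<le> y"
  shows "x powr a < y powr a \<longleftrightarrow> x < y"
proof
  {
    assume h: "x powr a < y powr a"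
    show "x < y"
    proof (rule ccontr)
      assume "\<not> x < y"
      then have "y \<le> x" by (simp add: not_less)
      then have "y powr a \<le> x powr a" using a by (intro powr_mono2) auto
      then show False using h by simp
    qed
  }
  {
    assume "x < y" then show "x powr a < y powr a" using a by (intro powr_less_mono2) auto
  }
qed

lemma epowr_mono: assumes "0 < a" "x \<le> y" shows "epowr x a \<le> epowr y a"
proof (cases "y = top")
  case False
  then have "x \<noteq> top" using assms top_unique by auto
  then show ?thesis using False assms
    unfolding epowr_def
    by (auto intro!: ennreal_leI powr_mono2 enn2real_mono simp: top.not_eq_extremum)
qed simp

lemma epowr_le_iff: assumes "0 < a" shows "epowr x a \<le> epowr y a \<longleftrightarrow> x \<le> y"
proof
  assume "epowr x a \<le> epowr y a"
  then have "epowr (epowr x a) (1/a) \<le> epowr (epowr y a) (1/a)"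
    by (rule epowr_mono[rotated]) (use assms in simp)
  then show "x \<le> y" using assms by (simp add: epowr_epowr epowr_one)
qed (rule epowr_mono[OF assms])

lemma epowr_mult: assumes "0 < c" shows "epowr (ennreal c * x) a = ennreal (c powr a) * epowr x a"
proof (cases "x = top")
  case True
  then show ?thesis using assms by (simp add: ennreal_mult_top)
next
  case False
  then have "ennreal c * x \<noteq> top" by (simp add: ennreal_mult_eq_top_iff)
  then show ?thesis using False assms
    by (simp add: epowr_def enn2real_mult powr_mult ennreal_mult)
qed

lemma iso_Inf:
  fixes \<phi> \<psi> :: "'a::complete_lattice \<Rightarrow> 'a"
  assumes "mono \<phi>" "mono \<psi>" "\<And>y. \<phi> (\<psi> y) = y" "\<And>y. \<psi> (\<phi> y) = y"
  shows "\<phi> (Inf A) = Inf (\<phi> ` A)"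
proof (rule antisym)
  show "\<phi> (Inf A) \<le> Inf (\<phi> ` A)"
    by (auto intro!: Inf_greatest monoD[OF assms(1)] Inf_lower)
  have "\<psi> (Inf (\<phi> ` A)) \<le> Inf A"
    by (rule Inf_greatest) (metis assms(2,4) Inf_lower imageI monoD)
  then have "\<phi> (\<psi> (Inf (\<phi> ` A))) \<le> \<phi> (Inf A)" by (rule monoD[OF assms(1)])
  then show "Inf (\<phi> ` A) \<le> \<phi> (Inf A)" using assms(3) by simp
qed

lemma dr_abs: "decr_rearr (\<lambda>x. \<bar>f x\<bar>) = decr_rearr f"
  by (rule ext) (simp add: decr_rearr_def)

lemma dr_pow:
  fixes f :: "'a::euclidean_space \<Rightarrow> real"
  assumes m: "0 < m"
  shows "decr_rearr (\<lambda>x. \<bar>f x\<bar> powr m) t = epowr (decr_rearr f t) m"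
proof -
  define S where "S = {s::real. 0 \<le> s \<and> emeasure lebesgue {x. s < \<bar>f x\<bar>} \<le> ennreal t}"
  have lt: "s < \<bar>f x\<bar> powr m \<longleftrightarrow> s powr (1/m) < \<bar>f x\<bar>" if "0 \<le> s" for s x
  proof -
    have e: "(\<bar>f x\<bar> powr m) powr (1/m) = \<bar>f x\<bar> powr (m * (1/m))" by (rule powr_powr)
    have e2: "\<bar>f x\<bar> powr (m * (1/m)) = \<bar>f x\<bar>" using m by simp
    have "s < \<bar>f x\<bar> powr m \<longleftrightarrow> s powr (1/m) < (\<bar>f x\<bar> powr m) powr (1/m)"
      using that m by (intro powr_less_iff_nn[symmetric]) auto
    then show ?thesis unfolding e e2 .
  qed
  have eq: "{s::real. 0 \<le> s \<and> emeasure lebesgue {x. s < \<bar>f x\<bar> powr m} \<le> ennreal t}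
      = (\<lambda>r. r powr m) ` S"
  proof (intro equalityI subsetI)
    fix s assume "s \<in> {s::real. 0 \<le> s \<and> emeasure lebesgue {x. s < \<bar>f x\<bar> powr m} \<le> ennreal t}"
    then have s: "0 \<le> s" "emeasure lebesgue {x. s < \<bar>f x\<bar> powr m} \<le> ennreal t" by auto
    have "(s powr (1/m)) powr m = s powr (1/m * m)" by (rule powr_powr)
    also have "\<dots> = s" using m s(1) by simp
    finally have s1: "s = (s powr (1/m)) powr m" by simp
    have seteq: "{x. s < \<bar>f x\<bar> powr m} = {x. s powr (1/m) < \<bar>f x\<bar>}" by (rule Collect_cong) (rule lt[OF s(1)])
    from s(2) have "emeasure lebesgue {x. s powr (1/m) < \<bar>f x\<bar>} \<le> ennreal t" unfolding seteq .
    then have "s powr (1/m) \<in> S" unfolding S_def mem_Collect_eq by (intro conjI powr_ge_zero)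
    then show "s \<in> (\<lambda>r. r powr m) ` S" using s1 by (rule rev_image_eqI)
  next
    fix y assume "y \<in> (\<lambda>r. r powr m) ` S"
    then obtain r where y: "y = r powr m" "r \<in> S" by blast
    then have r: "0 \<le> r" "emeasure lebesgue {x. r < \<bar>f x\<bar>} \<le> ennreal t" by (auto simp: S_def)
    have "{x. r powr m < \<bar>f x\<bar> powr m} = {x. r < \<bar>f x\<bar>}"
      by (intro Collect_cong powr_less_iff_nn m r(1) abs_ge_zero)
    then have "emeasure lebesgue {x. r powr m < \<bar>f x\<bar> powr m} \<le> ennreal t" using r(2) by (simp only:)
    then show "y \<in> {s::real. 0 \<le> s \<and> emeasure lebesgue {x. s < \<bar>f x\<bar> powr m} \<le> ennreal t}"
      unfolding y(1) mem_Collect_eq by (intro conjI powr_ge_zero)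
  qed
  have iso: "epowr (Inf A) m = Inf ((\<lambda>x. epowr x m) ` A)" for A
    by (rule iso_Inf[where \<psi>="\<lambda>x. epowr x (1/m)"])
       (use m in \<open>auto simp: mono_def epowr_mono epowr_epowr epowr_one\<close>)
  have "decr_rearr (\<lambda>x. \<bar>f x\<bar> powr m) t = Inf (ennreal ` ((\<lambda>r. r powr m) ` S))"
    unfolding decr_rearr_def using eq by simp
  also have "\<dots> = (INF r\<in>S. ennreal (r powr m))" by (simp add: image_image)
  also have "\<dots> = (INF r\<in>S. epowr (ennreal r) m)"
    by (rule INF_cong) (auto simp: S_def epowr_ennreal)
  also have "\<dots> = epowr (INF r\<in>S. ennreal r) m"
    using iso[of "ennreal ` S"] by (simp add: image_image)
  also have "\<dots> = epowr (decr_rearr f t) m"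
  proof -
    have "(INF r\<in>S. ennreal r) = decr_rearr f t" unfolding decr_rearr_def S_def ..
  then have "epowr (INF r\<in>S. ennreal r) m = epowr (decr_rearr f t) m" by (rule arg_cong)
    then show ?thesis .
  qed
  finally show ?thesis .
qed

theorem proposition3p10:
  fixes m p q C :: real and u v w :: "real \<Rightarrow> real"
  assumes "0 < m" "0 < p" "0 < q"
    and "is_weight u" "is_weight v" "admissible u v m p"
    and "is_weight w" and "0 < C"
  shows "(\<forall>f :: 'a::euclidean_space \<Rightarrow> real. f \<in> borel_measurable lebesgue \<longrightarrow>
            epowr (\<integral>\<^sup>+t\<in>{0<..}. ennreal (w t) * epowr (decr_rearr f t) q \<partial>lebesgue) (1 / q)
            \<le> ennreal C * epowr (\<integral>\<^sup>+t\<in>{0<..}. ennreal (v t) *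
                 epowr (\<integral>\<^sup>+s\<in>{t<..}. ennreal (u s) * epowr (decr_rearr f s) m \<partial>lebesgue) (p / m)
               \<partial>lebesgue) (1 / p))
     \<longleftrightarrow>
         (\<forall>f :: 'a::euclidean_space \<Rightarrow> real. f \<in> borel_measurable lebesgue \<longrightarrow>
            epowr (\<integral>\<^sup>+t\<in>{0<..}. ennreal (w t) * epowr (decr_rearr f t) (q / m) \<partial>lebesgue) (m / q)
            \<le> ennreal (C powr m) * epowr (\<integral>\<^sup>+t\<in>{0<..}. ennreal (v t) *
                 epowr (\<integral>\<^sup>+s\<in>{t<..}. ennreal (u s) * decr_rearr f s \<partial>lebesgue) (p / m)
               \<partial>lebesgue) (m / p))"
proof -
  define P1 where "P1 = (\<lambda>f::'a\<Rightarrow>real.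
            epowr (\<integral>\<^sup>+t\<in>{0<..}. ennreal (w t) * epowr (decr_rearr f t) q \<partial>lebesgue) (1 / q)
            \<le> ennreal C * epowr (\<integral>\<^sup>+t\<in>{0<..}. ennreal (v t) *
                 epowr (\<integral>\<^sup>+s\<in>{t<..}. ennreal (u s) * epowr (decr_rearr f s) m \<partial>lebesgue) (p / m)
               \<partial>lebesgue) (1 / p))"
  define P2 where "P2 = (\<lambda>f::'a\<Rightarrow>real.
            epowr (\<integral>\<^sup>+t\<in>{0<..}. ennreal (w t) * epowr (decr_rearr f t) (q / m) \<partial>lebesgue) (m / q)
            \<le> ennreal (C powr m) * epowr (\<integral>\<^sup>+t\<in>{0<..}. ennreal (v t) *
                 epowr (\<integral>\<^sup>+s\<in>{t<..}. ennreal (u s) * decr_rearr f s \<partial>lebesgue) (p / m)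
               \<partial>lebesgue) (m / p))"
  have m: "0 < m" "0 < q" "0 < p" "0 < C" using assms by auto
  have key: "P1 f \<longleftrightarrow> P2 (\<lambda>x. \<bar>f x\<bar> powr m)" for f :: "'a \<Rightarrow> real"
  proof -
    define A where "A = (\<integral>\<^sup>+t\<in>{0<..}. ennreal (w t) * epowr (decr_rearr f t) q \<partial>lebesgue)"
    define B where "B = (\<integral>\<^sup>+t\<in>{0<..}. ennreal (v t) *
                 epowr (\<integral>\<^sup>+s\<in>{t<..}. ennreal (u s) * epowr (decr_rearr f s) m \<partial>lebesgue) (p / m)
               \<partial>lebesgue)"
    have dr: "decr_rearr (\<lambda>x. \<bar>f x\<bar> powr m) = (\<lambda>t. epowr (decr_rearr f t) m)"
      using m by (intro ext dr_pow) 
    have qq: "m * (q / m) = q" using m by simp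
    have "P2 (\<lambda>x. \<bar>f x\<bar> powr m) \<longleftrightarrow> epowr A (m / q) \<le> ennreal (C powr m) * epowr B (m / p)"
      by (simp only: P2_def dr A_def B_def epowr_epowr qq)
    also have "\<dots> \<longleftrightarrow> epowr (epowr A (1/q)) m \<le> epowr (ennreal C * epowr B (1/p)) m"
      using m by (simp add: epowr_mult epowr_epowr)
    also have "\<dots> \<longleftrightarrow> P1 f"
      unfolding P1_def A_def B_def using m by (simp add: epowr_le_iff)
    finally show ?thesis by simp
  qed
  have main: "(\<forall>f::'a\<Rightarrow>real. f \<in> borel_measurable lebesgue \<longrightarrow> P1 f)
     \<longleftrightarrow> (\<forall>f::'a\<Rightarrow>real. f \<in> borel_measurable lebesgue \<longrightarrow> P2 f)"
  proof safe
    fix g :: "'a \<Rightarrow> real"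
    assume H: "\<forall>f::'a\<Rightarrow>real. f \<in> borel_measurable lebesgue \<longrightarrow> P1 f"
      and g: "g \<in> borel_measurable lebesgue"
    define f where "f = (\<lambda>x. \<bar>g x\<bar> powr (1/m))"
    have "f \<in> borel_measurable lebesgue" unfolding f_def using g by (rule measurable_abs_powr)
    then have "P1 f" using H by blast
    then have "P2 (\<lambda>x. \<bar>f x\<bar> powr m)" by (rule key[THEN iffD1])
    moreover have eqfg: "(\<lambda>x. \<bar>f x\<bar> powr m) = (\<lambda>x. \<bar>g x\<bar>)"
    proof
      fix x
      have "(\<bar>g x\<bar> powr (1/m)) powr m = \<bar>g x\<bar> powr (1/m * m)" by (rule powr_powr)
      also have "\<dots> = \<bar>g x\<bar>" using m by simp
      finally show "\<bar>f x\<bar> powr m = \<bar>g x\<bar>" unfolding f_def by simp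
    qed
    ultimately have "P2 (\<lambda>x. \<bar>g x\<bar>)" by (simp only:)
    then show "P2 g" by (simp only: P2_def dr_abs)
  next
    fix f :: "'a \<Rightarrow> real"
    assume H: "\<forall>f::'a\<Rightarrow>real. f \<in> borel_measurable lebesgue \<longrightarrow> P2 f"
      and f: "f \<in> borel_measurable lebesgue"
    have "(\<lambda>x. \<bar>f x\<bar> powr m) \<in> borel_measurable lebesgue" using f by (rule measurable_abs_powr)
    then have "P2 (\<lambda>x. \<bar>f x\<bar> powr m)" using H by blast
    then show "P1 f" by (rule key[THEN iffD2])
  qed
  show ?thesis using main unfolding P1_def P2_def by blast
qed

end
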